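(* If $G$ is a finitely generated nilpotent group, then there is a polynomial $p$ such that for every $n\in\mathbb{N}$, every element of $G^{\omega,n}$ satisfies a recurrence of order $p(n)$.
   Context: $G^\omega$ is the group of all functions $f\colon\mathbb{N}\to G$ under pointwise multiplication. $f$ has period at most $n$ if there is $1\le q\le n$ with $f(t)=f(t+q)$ for all $t\ge0$. $G^{\omega,n}$ is the subgroup of $G^\omega$ generated by all elements of period at most $n$. The shift $\rho\colon G^\omega\to G^\omega$ is $(\rho(f))(t)=f(t+1)$. For a subgroup $K\le G^\omega$, $K^{(n)}$ is the smallest subgroup of $G^\omega$ containing $\rho^0(K),\rho^1(K),\ldots,\rho^n(K)$. A function $f\in G^\omega$ satisfies a recurrence of order $d\ge1$ if $\rho^d(f)\in\langle f\rangle^{(d-1)}$. *)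

theory Defs
  imports "HOL-Algebra.Algebra" "HOL-Computational_Algebra.Polynomial"
begin

definition comm_subgroup :: "('a, 'b) monoid_scheme \<Rightarrow> 'a set \<Rightarrow> 'a set \<Rightarrow> 'a set" where
  "comm_subgroup G H K = generate G
     {h \<otimes>\<^bsub>G\<^esub> k \<otimes>\<^bsub>G\<^esub> inv\<^bsub>G\<^esub> h \<otimes>\<^bsub>G\<^esub> inv\<^bsub>G\<^esub> k | h k. h \<in> H \<and> k \<in> K}"

fun lcs :: "('a, 'b) monoid_scheme \<Rightarrow> nat \<Rightarrow> 'a set" where
  "lcs G 0 = carrier G"
| "lcs G (Suc i) = comm_subgroup G (lcs G i) (carrier G)"

definition nilpotent_group :: "('a, 'b) monoid_scheme \<Rightarrow> bool" where
  "nilpotent_group G \<longleftrightarrow> group G \<and> (\<exists>c. lcs G c = {\<one>\<^bsub>G\<^esub>})"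

definition finitely_generated_group :: "('a, 'b) monoid_scheme \<Rightarrow> bool" where
  "finitely_generated_group G \<longleftrightarrow>
     (\<exists>S. finite S \<and> S \<subseteq> carrier G \<and> generate G S = carrier G)"

definition seq_group :: "('a, 'b) monoid_scheme \<Rightarrow> (nat \<Rightarrow> 'a) monoid" where
  "seq_group G = \<lparr> partial_object.carrier = {f. \<forall>t. f t \<in> carrier G},
                   monoid.mult = (\<lambda>f g t. f t \<otimes>\<^bsub>G\<^esub> g t),
                   monoid.one = (\<lambda>t. \<one>\<^bsub>G\<^esub>) \<rparr>"

definition has_period_at_most :: "nat \<Rightarrow> (nat \<Rightarrow> 'a) \<Rightarrow> bool" where
  "has_period_at_most n f \<longleftrightarrow> (\<exists>q. 1 \<le> q \<and> q \<le> n \<and> (\<forall>t. f t = f (t + q)))"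

definition periodic_subgroup :: "('a, 'b) monoid_scheme \<Rightarrow> nat \<Rightarrow> (nat \<Rightarrow> 'a) set" where
  "periodic_subgroup G n = generate (seq_group G)
      {f \<in> carrier (seq_group G). has_period_at_most n f}"

definition shift :: "(nat \<Rightarrow> 'a) \<Rightarrow> nat \<Rightarrow> 'a" where
  "shift f = (\<lambda>t. f (t + 1))"

definition shift_closure :: "('a, 'b) monoid_scheme \<Rightarrow> (nat \<Rightarrow> 'a) set \<Rightarrow> nat \<Rightarrow> (nat \<Rightarrow> 'a) set" where
  "shift_closure G K n = generate (seq_group G) (\<Union>i\<in>{0..n}. (shift ^^ i) ` K)"

definition satisfies_recurrence :: "('a, 'b) monoid_scheme \<Rightarrow> nat \<Rightarrow> (nat \<Rightarrow> 'a) \<Rightarrow> bool" where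
  "satisfies_recurrence G d f \<longleftrightarrow> 1 \<le> d \<and>
     (shift ^^ d) f \<in> shift_closure G (generate (seq_group G) {f}) (d - 1)"

end

theory Submission
  imports Defs
begin

definition per :: "nat \<Rightarrow> (nat \<Rightarrow> 'a) \<Rightarrow> bool" where
  "per p g \<longleftrightarrow> (\<forall>t. g (t + p) = g t)"

lemma per_mult: "per p g \<Longrightarrow> per (p * m) g"
  unfolding per_def
proof (induction m)
  case 0 then show ?case by simp
next
  case (Suc m)
  show ?case
  proof
    fix t
    have "g (t + p * Suc m) = g ((t + p*m) + p)" by (simp add: algebra_simps)
    also have "\<dots> = g (t + p*m)" using Suc.prems by blast
    also have "\<dots> = g t" using Suc by blast
    finally show "g (t + p * Suc m) = g t" .
  qed
qed

lemma per_mult2: "per p g \<Longrightarrow> per (m * p) g"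
  using per_mult[of p g m] by (simp add: mult.commute)

lemma shift_pow: "(shift ^^ q) f = (\<lambda>t. f (t + q))"
  by (induction q arbitrary: f) (auto simp: shift_def ac_simps)

context group
begin

lemma cancel1 [simp]: "x \<in> carrier G \<Longrightarrow> y \<in> carrier G \<Longrightarrow> inv x \<otimes> (x \<otimes> y) = y"
  by (simp add: m_assoc[symmetric])
lemma cancel2 [simp]: "x \<in> carrier G \<Longrightarrow> y \<in> carrier G \<Longrightarrow> x \<otimes> (inv x \<otimes> y) = y"
  by (simp add: m_assoc[symmetric])

lemma seq_carrier: "carrier (seq_group G) = {f. \<forall>t. f t \<in> carrier G}"
  by (simp add: seq_group_def)
lemma seq_mult: "x \<otimes>\<^bsub>seq_group G\<^esub> y = (\<lambda>t. x t \<otimes> y t)"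
  by (simp add: seq_group_def)
lemma seq_one: "\<one>\<^bsub>seq_group G\<^esub> = (\<lambda>t. \<one>)"
  by (simp add: seq_group_def)

lemma seq_group_is_group: "group (seq_group G)"
  apply (rule groupI)
      apply (auto simp: seq_carrier seq_mult seq_one m_assoc)
  apply (rule_tac x="\<lambda>t. inv (x t)" in exI)
  apply auto
  done

lemma seq_inv:
  assumes "x \<in> carrier (seq_group G)"
  shows "inv\<^bsub>seq_group G\<^esub> x = (\<lambda>t. inv (x t))"
proof -
  interpret S: group "seq_group G" by (rule seq_group_is_group)
  show ?thesis
    apply (rule S.inv_equality)
    using assms by (auto simp: seq_carrier seq_mult seq_one)
qed

lemma conj_split:
  "a \<in> carrier G \<Longrightarrow> b \<in> carrier G \<Longrightarrow> b \<otimes> a \<otimes> inv b = a \<otimes> (inv a \<otimes> b \<otimes> a \<otimes> inv b)"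
  by (simp add: m_assoc)

lemma conj_gen:
  assumes "A \<subseteq> carrier G" "u \<in> carrier G"
    "\<And>a. a \<in> A \<Longrightarrow> u \<otimes> a \<otimes> inv u \<in> generate G A" "x \<in> generate G A"
  shows "u \<otimes> x \<otimes> inv u \<in> generate G A"
  using assms(4)
proof (induction rule: generate.induct)
  case one then show ?case using assms(2) by (simp add: generate.one)
next
  case (incl h) then show ?case using assms(3) by blast
next
  case (inv h)
  have hc: "h \<in> carrier G" using inv assms(1) by blast
  have "u \<otimes> inv h \<otimes> inv u = inv (u \<otimes> h \<otimes> inv u)"
    using hc assms(2) by (simp add: inv_mult_group m_assoc)
  then show ?case using generate_m_inv_closed[OF assms(1) assms(3)[OF inv]] by simp
next
  case (eng h1 h2)
  have c1: "h1 \<in> carrier G" "h2 \<in> carrier G"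
    using eng generate_in_carrier assms(1) by blast+
  have "u \<otimes> (h1 \<otimes> h2) \<otimes> inv u = (u \<otimes> h1 \<otimes> inv u) \<otimes> (u \<otimes> h2 \<otimes> inv u)"
    using c1 assms(2) by (simp add: m_assoc)
  then show ?case using generate.eng[OF eng.IH] by simp
qed

lemma conj_gen2:
  assumes "A \<subseteq> carrier G" "B \<subseteq> carrier G" "\<And>b. b \<in> B \<Longrightarrow> inv b \<in> B"
    "\<And>a b. a \<in> A \<Longrightarrow> b \<in> B \<Longrightarrow> b \<otimes> a \<otimes> inv b \<in> generate G A"
    "u \<in> generate G B"
  shows "\<forall>x\<in>generate G A. u \<otimes> x \<otimes> inv u \<in> generate G A"
  using assms(5)
proof (induction rule: generate.induct)
  case one then show ?case using generate_in_carrier[OF assms(1)] by auto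
next
  case (incl b) then show ?case using conj_gen[OF assms(1), of b] assms by blast
next
  case (inv b)
  then have "inv b \<in> B" "inv b \<in> carrier G" using assms by blast+
  then show ?case using conj_gen[OF assms(1), of "inv b"] assms(4) by blast
next
  case (eng h1 h2)
  have c1: "h1 \<in> carrier G" "h2 \<in> carrier G"
    using eng generate_in_carrier assms(2) by blast+
  show ?case
  proof
    fix x assume x: "x \<in> generate G A"
    then have xc: "x \<in> carrier G" using generate_in_carrier assms(1) by blast
    have "h1 \<otimes> h2 \<otimes> x \<otimes> inv (h1 \<otimes> h2) = h1 \<otimes> (h2 \<otimes> x \<otimes> inv h2) \<otimes> inv h1"
      using c1 xc by (simp add: m_assoc inv_mult_group)
    then show "h1 \<otimes> h2 \<otimes> x \<otimes> inv (h1 \<otimes> h2) \<in> generate G A"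
      using eng.IH x by simp
  qed
qed

lemma lcs_subgroup: "subgroup (lcs G j) G"
proof (induction j)
  case 0 then show ?case by (simp add: subgroup_self)
next
  case (Suc j)
  have "{h \<otimes> k \<otimes> inv h \<otimes> inv k | h k. h \<in> lcs G j \<and> k \<in> carrier G} \<subseteq> carrier G"
    using Suc subgroup.mem_carrier by fastforce
  then show ?case by (simp add: comm_subgroup_def generate_is_subgroup)
qed

lemma lcs_carrier: "x \<in> lcs G j \<Longrightarrow> x \<in> carrier G"
  by (rule subgroup.mem_carrier[OF lcs_subgroup])

lemma lcs_inv: "x \<in> lcs G j \<Longrightarrow> inv x \<in> lcs G j"
  by (rule subgroup.m_inv_closed[OF lcs_subgroup])

lemma lcs_comm: "h \<in> lcs G j \<Longrightarrow> k \<in> carrier G \<Longrightarrow> h \<otimes> k \<otimes> inv h \<otimes> inv k \<in> lcs G (Suc j)"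
proof -
  assume a: "h \<in> lcs G j" "k \<in> carrier G"
  have "h \<otimes> k \<otimes> inv h \<otimes> inv k \<in> {h \<otimes> k \<otimes> inv h \<otimes> inv k | h k. h \<in> lcs G j \<and> k \<in> carrier G}"
    using a by auto
  then show ?thesis by (simp add: comm_subgroup_def generate.incl)
qed

lemma lcs_triv:
  assumes "lcs G c = {\<one>}" "c \<le> j" shows "lcs G j = {\<one>}"
  using assms(2)
proof (induction j rule: dec_induct)
  case base then show ?case using assms(1) .
next
  case (step n)
  let ?X = "{h \<otimes> k \<otimes> inv h \<otimes> inv k | h k. h \<in> lcs G n \<and> k \<in> carrier G}"
  have "?X = {\<one>}"
  proof
    show "?X \<subseteq> {\<one>}"
    proof
      fix x assume "x \<in> ?X"
      then obtain h k where "x = h \<otimes> k \<otimes> inv h \<otimes> inv k" "h \<in> lcs G n" "k \<in> carrier G"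
        by blast
      then show "x \<in> {\<one>}" using step.IH by simp
    qed
    have "\<one> \<otimes> \<one> \<otimes> inv \<one> \<otimes> inv \<one> \<in> ?X"
      by (rule CollectI, rule exI[of _ \<one>], rule exI[of _ \<one>]) (simp add: step.IH)
    then show "{\<one>} \<subseteq> ?X" by simp
  qed
  then show ?case by (simp add: comm_subgroup_def generate_one)
qed

end



locale seqctx = group G for G :: "('a, 'b) monoid_scheme" (structure) +
  fixes N :: "nat \<Rightarrow> nat" and c :: nat
  assumes N_mult: "\<And>i j. N i * N j \<le> N (Suc (max i j))"
    and nil: "lcs G c = {\<one>\<^bsub>G\<^esub>}"
begin

abbreviation "SG \<equiv> seq_group G"

sublocale Sg: group SG by (rule seq_group_is_group)

definition lev :: "nat \<Rightarrow> (nat \<Rightarrow> 'a) \<Rightarrow> bool" where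
  "lev j g \<longleftrightarrow> (\<forall>t. g t \<in> lcs G j)"

definition gens :: "nat \<Rightarrow> (nat \<Rightarrow> 'a) set" where
  "gens k = {g \<in> carrier SG. \<exists>j\<ge>k. lev j g \<and> (\<exists>p. 1 \<le> p \<and> p \<le> N j \<and> per p g)}"

definition Psi :: "nat \<Rightarrow> (nat \<Rightarrow> 'a) set" where
  "Psi k = generate SG (gens k)"

definition rgens :: "nat \<Rightarrow> nat set \<Rightarrow> (nat \<Rightarrow> 'a) set" where
  "rgens k Q = gens (Suc k) \<union> {g \<in> carrier SG. lev k g \<and> (\<exists>p\<in>Q. 1 \<le> p \<and> p \<le> N k \<and> per p g)}"

definition Rs :: "nat \<Rightarrow> nat set \<Rightarrow> (nat \<Rightarrow> 'a) set" where
  "Rs k Q = generate SG (rgens k Q)"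

definition Top :: "nat \<Rightarrow> (nat \<Rightarrow> 'a) \<Rightarrow> (nat \<Rightarrow> 'a)" where
  "Top q x = (shift ^^ q) x \<otimes>\<^bsub>SG\<^esub> inv\<^bsub>SG\<^esub> x"

lemma gens_carrier: "gens k \<subseteq> carrier SG"
  by (auto simp: gens_def)

lemma rgens_carrier: "rgens k Q \<subseteq> carrier SG"
  by (auto simp: rgens_def gens_def)

lemma gens_anti: "k \<le> k' \<Longrightarrow> gens k' \<subseteq> gens k"
  unfolding gens_def by (auto intro: order_trans)

lemma rgens_gens0: "rgens k Q \<subseteq> gens 0"
  unfolding rgens_def gens_def by blast

lemma Rs_Psi0: "Rs k Q \<subseteq> Psi 0"
  unfolding Rs_def Psi_def by (rule Sg.mono_generate[OF rgens_gens0])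

lemma carrier_SG: "x \<in> carrier SG \<Longrightarrow> x t \<in> carrier G"
  by (simp add: seq_carrier)

lemma shift_carrier: "x \<in> carrier SG \<Longrightarrow> (shift ^^ q) x \<in> carrier SG"
  by (simp add: seq_carrier shift_pow)

lemma shift_mult: "(shift ^^ q) (x \<otimes>\<^bsub>SG\<^esub> y) = (shift ^^ q) x \<otimes>\<^bsub>SG\<^esub> (shift ^^ q) y"
  by (simp add: seq_mult shift_pow)

lemma shift_inv: "x \<in> carrier SG \<Longrightarrow> (shift ^^ q) (inv\<^bsub>SG\<^esub> x) = inv\<^bsub>SG\<^esub> ((shift ^^ q) x)"
proof -
  assume x: "x \<in> carrier SG"
  have "(\<lambda>t. x (t+q)) \<in> carrier SG" using x by (simp add: seq_carrier)
  then show ?thesis using x by (simp add: seq_inv shift_pow)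
qed

lemma shift_one: "(shift ^^ q) \<one>\<^bsub>SG\<^esub> = \<one>\<^bsub>SG\<^esub>"
  by (simp add: seq_one shift_pow)

lemma gens_inv: "g \<in> gens k \<Longrightarrow> inv\<^bsub>SG\<^esub> g \<in> gens k"
proof -
  assume g: "g \<in> gens k"
  then obtain j p where jp: "j \<ge> k" "lev j g" "1 \<le> p" "p \<le> N j" "per p g" "g \<in> carrier SG"
    by (auto simp: gens_def)
  have "lev j (inv\<^bsub>SG\<^esub> g)" using jp by (simp add: lev_def seq_inv lcs_inv)
  moreover have "per p (inv\<^bsub>SG\<^esub> g)" using jp by (simp add: per_def seq_inv)
  ultimately show ?thesis using jp by (auto simp: gens_def)
qed

lemma shift_gens: "g \<in> gens k \<Longrightarrow> (shift ^^ q) g \<in> gens k"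
proof -
  assume g: "g \<in> gens k"
  then obtain j p where jp: "j \<ge> k" "lev j g" "1 \<le> p" "p \<le> N j" "per p g" "g \<in> carrier SG"
    by (auto simp: gens_def)
  have "lev j ((shift ^^ q) g)" using jp by (simp add: lev_def shift_pow)
  moreover have "per p ((shift ^^ q) g)" using jp 
    by (simp add: per_def shift_pow) (metis add.commute add.left_commute)
  ultimately show ?thesis using jp shift_carrier by (auto simp: gens_def)
qed

lemma comm_gen:
  assumes u: "u \<in> carrier SG" "lev i u" "per r u" "1 \<le> r" "r \<le> N i"
    and g: "g \<in> carrier SG" "lev j g" "per p g" "1 \<le> p" "p \<le> N j"
  shows "inv\<^bsub>SG\<^esub> g \<otimes>\<^bsub>SG\<^esub> u \<otimes>\<^bsub>SG\<^esub> g \<otimes>\<^bsub>SG\<^esub> inv\<^bsub>SG\<^esub> u \<in> gens (Suc j)"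
proof -
  let ?h = "\<lambda>t. inv (g t) \<otimes> u t \<otimes> g t \<otimes> inv (u t)"
  have eq: "inv\<^bsub>SG\<^esub> g \<otimes>\<^bsub>SG\<^esub> u \<otimes>\<^bsub>SG\<^esub> g \<otimes>\<^bsub>SG\<^esub> inv\<^bsub>SG\<^esub> u = ?h"
    using u g by (simp add: seq_inv seq_mult)
  have uc: "\<And>t. u t \<in> carrier G" and gc: "\<And>t. g t \<in> carrier G"
    using u g carrier_SG by auto
  have lv: "lev (Suc (max i j)) ?h"
    unfolding lev_def
  proof
    fix t
    show "?h t \<in> lcs G (Suc (max i j))"
    proof (cases "i \<le> j")
      case True
      have "inv (g t) \<in> lcs G j" using g(2) lcs_inv lev_def by blast
      then have "inv (g t) \<otimes> u t \<otimes> inv (inv (g t)) \<otimes> inv (u t) \<in> lcs G (Suc j)"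
        using lcs_comm uc by blast
      then show ?thesis using True gc by (simp add: max_def)
    next
      case False
      have "u t \<in> lcs G i" using u(2) lev_def by blast
      then have "u t \<otimes> inv (g t) \<otimes> inv (u t) \<otimes> inv (inv (g t)) \<in> lcs G (Suc i)"
        using lcs_comm gc by blast
      then have "inv (u t \<otimes> inv (g t) \<otimes> inv (u t) \<otimes> inv (inv (g t))) \<in> lcs G (Suc i)"
        by (rule lcs_inv)
      moreover have "inv (u t \<otimes> inv (g t) \<otimes> inv (u t) \<otimes> inv (inv (g t))) = ?h t"
        using uc gc by (simp add: inv_mult_group m_assoc)
      ultimately show ?thesis using False by (simp add: max_def)
    qed
  qed
  have pg: "per (p * r) g" using g(3) by (rule per_mult)
  have pu: "per (p * r) u" using u(3) by (rule per_mult2)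
  have ph: "per (p * r) ?h" using pg pu by (simp add: per_def)
  have "p * r \<le> N j * N i" using u g by (intro mult_le_mono) auto
  also have "\<dots> \<le> N (Suc (max j i))" by (rule N_mult)
  finally have bd: "p * r \<le> N (Suc (max i j))" by (simp add: max.commute)
  have pos: "1 \<le> p * r" using u g by simp
  have hc: "?h \<in> carrier SG" using uc gc by (simp add: seq_carrier)
  have "1 \<le> p * r \<and> p * r \<le> N (Suc (max i j)) \<and> per (p * r) ?h" using ph bd pos by simp
  then have "\<exists>p'. 1 \<le> p' \<and> p' \<le> N (Suc (max i j)) \<and> per p' ?h" by blast
  then have "Suc j \<le> Suc (max i j) \<and> lev (Suc (max i j)) ?h \<and> (\<exists>p'. 1 \<le> p' \<and> p' \<le> N (Suc (max i j)) \<and> per p' ?h)"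
    using lv by simp
  then have "\<exists>j'\<ge>Suc j. lev j' ?h \<and> (\<exists>p'. 1 \<le> p' \<and> p' \<le> N j' \<and> per p' ?h)" by blast
  then show ?thesis unfolding eq gens_def using hc by blast
qed

end



context seqctx
begin

lemma conj_gens_Psi:
  assumes a: "a \<in> gens k" and b: "b \<in> gens 0"
  shows "b \<otimes>\<^bsub>SG\<^esub> a \<otimes>\<^bsub>SG\<^esub> inv\<^bsub>SG\<^esub> b \<in> Psi k"
proof -
  obtain j p where jp: "j \<ge> k" "lev j a" "1 \<le> p" "p \<le> N j" "per p a" "a \<in> carrier SG"
    using a by (auto simp: gens_def)
  obtain i r where ir: "lev i b" "1 \<le> r" "r \<le> N i" "per r b" "b \<in> carrier SG"
    using b by (auto simp: gens_def)
  have cm: "inv\<^bsub>SG\<^esub> a \<otimes>\<^bsub>SG\<^esub> b \<otimes>\<^bsub>SG\<^esub> a \<otimes>\<^bsub>SG\<^esub> inv\<^bsub>SG\<^esub> b \<in> gens (Suc j)"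
    using comm_gen[of b i r a j p] jp ir by blast
  then have cm': "inv\<^bsub>SG\<^esub> a \<otimes>\<^bsub>SG\<^esub> b \<otimes>\<^bsub>SG\<^esub> a \<otimes>\<^bsub>SG\<^esub> inv\<^bsub>SG\<^esub> b \<in> gens k"
    using gens_anti[of k "Suc j"] jp by auto
  have "b \<otimes>\<^bsub>SG\<^esub> a \<otimes>\<^bsub>SG\<^esub> inv\<^bsub>SG\<^esub> b
      = a \<otimes>\<^bsub>SG\<^esub> (inv\<^bsub>SG\<^esub> a \<otimes>\<^bsub>SG\<^esub> b \<otimes>\<^bsub>SG\<^esub> a \<otimes>\<^bsub>SG\<^esub> inv\<^bsub>SG\<^esub> b)"
    using jp ir by (simp add: Sg.conj_split)
  then show ?thesis unfolding Psi_def
    using generate.eng[OF generate.incl[OF a] generate.incl[OF cm']] by simp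
qed

lemma Psi_conj: "u \<in> Psi 0 \<Longrightarrow> x \<in> Psi k \<Longrightarrow> u \<otimes>\<^bsub>SG\<^esub> x \<otimes>\<^bsub>SG\<^esub> inv\<^bsub>SG\<^esub> u \<in> Psi k"
proof -
  assume u: "u \<in> Psi 0" and x: "x \<in> Psi k"
  have "\<forall>x\<in>generate SG (gens k). u \<otimes>\<^bsub>SG\<^esub> x \<otimes>\<^bsub>SG\<^esub> inv\<^bsub>SG\<^esub> u \<in> generate SG (gens k)"
  proof (rule Sg.conj_gen2)
    show "gens k \<subseteq> carrier SG" "gens 0 \<subseteq> carrier SG" by (rule gens_carrier)+
    show "\<And>b. b \<in> gens 0 \<Longrightarrow> inv\<^bsub>SG\<^esub> b \<in> gens 0" by (rule gens_inv)
    show "\<And>a b. a \<in> gens k \<Longrightarrow> b \<in> gens 0 \<Longrightarrow> b \<otimes>\<^bsub>SG\<^esub> a \<otimes>\<^bsub>SG\<^esub> inv\<^bsub>SG\<^esub> b \<in> generate SG (gens k)"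
      using conj_gens_Psi unfolding Psi_def by blast
    show "u \<in> generate SG (gens 0)" using u unfolding Psi_def .
  qed
  then show ?thesis using x unfolding Psi_def by blast
qed

lemma conj_rgens:
  assumes a: "a \<in> rgens k Q" and b: "b \<in> gens 0"
  shows "b \<otimes>\<^bsub>SG\<^esub> a \<otimes>\<^bsub>SG\<^esub> inv\<^bsub>SG\<^esub> b \<in> Rs k Q"
proof (cases "a \<in> gens (Suc k)")
  case True
  have "Psi (Suc k) \<subseteq> Rs k Q" unfolding Psi_def Rs_def
    by (rule Sg.mono_generate) (auto simp: rgens_def)
  then show ?thesis using conj_gens_Psi[OF True b] by blast
next
  case False
  then obtain p where jp: "lev k a" "1 \<le> p" "p \<le> N k" "per p a" "a \<in> carrier SG"
    using a by (auto simp: rgens_def)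
  obtain i r where ir: "lev i b" "1 \<le> r" "r \<le> N i" "per r b" "b \<in> carrier SG"
    using b by (auto simp: gens_def)
  have cm: "inv\<^bsub>SG\<^esub> a \<otimes>\<^bsub>SG\<^esub> b \<otimes>\<^bsub>SG\<^esub> a \<otimes>\<^bsub>SG\<^esub> inv\<^bsub>SG\<^esub> b \<in> rgens k Q"
    using comm_gen[of b i r a k p] jp ir by (auto simp: rgens_def)
  have "b \<otimes>\<^bsub>SG\<^esub> a \<otimes>\<^bsub>SG\<^esub> inv\<^bsub>SG\<^esub> b
      = a \<otimes>\<^bsub>SG\<^esub> (inv\<^bsub>SG\<^esub> a \<otimes>\<^bsub>SG\<^esub> b \<otimes>\<^bsub>SG\<^esub> a \<otimes>\<^bsub>SG\<^esub> inv\<^bsub>SG\<^esub> b)"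
    using jp ir by (simp add: Sg.conj_split)
  then show ?thesis unfolding Rs_def
    using generate.eng[OF generate.incl[OF a] generate.incl[OF cm]] by simp
qed

lemma Rs_conj: "u \<in> Psi 0 \<Longrightarrow> x \<in> Rs k Q \<Longrightarrow> u \<otimes>\<^bsub>SG\<^esub> x \<otimes>\<^bsub>SG\<^esub> inv\<^bsub>SG\<^esub> u \<in> Rs k Q"
proof -
  assume u: "u \<in> Psi 0" and x: "x \<in> Rs k Q"
  have "\<forall>x\<in>generate SG (rgens k Q). u \<otimes>\<^bsub>SG\<^esub> x \<otimes>\<^bsub>SG\<^esub> inv\<^bsub>SG\<^esub> u \<in> generate SG (rgens k Q)"
  proof (rule Sg.conj_gen2)
    show "rgens k Q \<subseteq> carrier SG" "gens 0 \<subseteq> carrier SG" by (rule rgens_carrier, rule gens_carrier)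
    show "\<And>b. b \<in> gens 0 \<Longrightarrow> inv\<^bsub>SG\<^esub> b \<in> gens 0" by (rule gens_inv)
    show "\<And>a b. a \<in> rgens k Q \<Longrightarrow> b \<in> gens 0 \<Longrightarrow> b \<otimes>\<^bsub>SG\<^esub> a \<otimes>\<^bsub>SG\<^esub> inv\<^bsub>SG\<^esub> b \<in> generate SG (rgens k Q)"
      using conj_rgens unfolding Rs_def by blast
    show "u \<in> generate SG (gens 0)" using u unfolding Psi_def .
  qed
  then show ?thesis using x unfolding Rs_def by blast
qed

lemma Top_eq: "x \<in> carrier SG \<Longrightarrow> Top q x = (\<lambda>t. x (t+q) \<otimes> inv (x t))"
  by (simp add: Top_def shift_pow seq_mult seq_inv)

lemma Top_carrier: "x \<in> carrier SG \<Longrightarrow> Top q x \<in> carrier SG"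
  by (simp add: Top_def shift_carrier)

lemma Top_per: "x \<in> carrier SG \<Longrightarrow> per q x \<Longrightarrow> Top q x = \<one>\<^bsub>SG\<^esub>"
  by (simp add: Top_eq seq_one per_def carrier_SG)

lemma Top_one: "Top q \<one>\<^bsub>SG\<^esub> = \<one>\<^bsub>SG\<^esub>"
  by (rule Top_per[OF Sg.one_closed]) (simp add: per_def seq_one)

lemma Top_mult:
  assumes x: "x \<in> carrier SG" and y: "y \<in> carrier SG"
  shows "Top q (x \<otimes>\<^bsub>SG\<^esub> y) = Top q x \<otimes>\<^bsub>SG\<^esub> (x \<otimes>\<^bsub>SG\<^esub> Top q y \<otimes>\<^bsub>SG\<^esub> inv\<^bsub>SG\<^esub> x)"
proof -
  have xy: "x \<otimes>\<^bsub>SG\<^esub> y \<in> carrier SG" using x y by simp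
  have xc: "\<And>t. x t \<in> carrier G" and yc: "\<And>t. y t \<in> carrier G" using x y carrier_SG by auto
  show ?thesis
    unfolding Top_eq[OF xy] Top_eq[OF x] Top_eq[OF y] seq_inv[OF x]
    using xc yc by (simp add: seq_mult m_assoc inv_mult_group)
qed

lemma rgens_shift: "h \<in> rgens k Q \<Longrightarrow> (shift ^^ q) h \<in> rgens k Q"
proof -
  assume h: "h \<in> rgens k Q"
  show ?thesis
  proof (cases "h \<in> gens (Suc k)")
    case True then show ?thesis using shift_gens by (auto simp: rgens_def)
  next
    case False
    then obtain p where jp: "lev k h" "p \<in> Q" "1 \<le> p" "p \<le> N k" "per p h" "h \<in> carrier SG"
      using h by (auto simp: rgens_def)
    have "lev k ((shift ^^ q) h)" using jp by (simp add: lev_def shift_pow)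
    moreover have "per p ((shift ^^ q) h)" using jp
      by (simp add: per_def shift_pow) (metis add.commute add.left_commute)
    ultimately show ?thesis using jp shift_carrier by (auto simp: rgens_def)
  qed
qed

lemma Top_Rs:
  assumes x: "x \<in> Rs k Q" and q: "q \<in> Q"
  shows "Top q x \<in> Rs k (Q - {q})"
  using x unfolding Rs_def
proof (induction x rule: generate.induct)
  case one then show ?case by (simp add: Top_one generate.one)
next
  case (incl h)
  have hc: "h \<in> carrier SG" using incl rgens_carrier by blast
  show ?case
  proof (cases "h \<in> rgens k (Q - {q})")
    case True
    have sh: "(shift ^^ q) h \<in> rgens k (Q - {q})" using True by (rule rgens_shift)
    have "(shift ^^ q) h \<otimes>\<^bsub>SG\<^esub> inv\<^bsub>SG\<^esub> h \<in> generate SG (rgens k (Q - {q}))"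
      by (rule generate.eng[OF generate.incl[OF sh] generate.inv[OF True]])
    then show ?thesis unfolding Top_def .
  next
    case False
    then have "per q h" using incl by (auto simp: rgens_def)
    then show ?thesis using hc Top_per by (simp add: generate.one)
  qed
next
  case (inv h)
  have hc: "h \<in> carrier SG" using inv rgens_carrier by blast
  have eq: "Top q (inv\<^bsub>SG\<^esub> h) = inv\<^bsub>SG\<^esub> ((shift ^^ q) h) \<otimes>\<^bsub>SG\<^esub> h"
    unfolding Top_def using hc by (simp add: shift_inv)
  show ?case
  proof (cases "h \<in> rgens k (Q - {q})")
    case True
    have sh: "(shift ^^ q) h \<in> rgens k (Q - {q})" using True by (rule rgens_shift)
    have "inv\<^bsub>SG\<^esub> ((shift ^^ q) h) \<otimes>\<^bsub>SG\<^esub> h \<in> generate SG (rgens k (Q - {q}))"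
      by (rule generate.eng[OF generate.inv[OF sh] generate.incl[OF True]])
    then show ?thesis unfolding eq .
  next
    case False
    then have p: "per q h" using inv by (auto simp: rgens_def)
    have "(shift ^^ q) h = h" using p by (simp add: shift_pow per_def)
    then have "Top q (inv\<^bsub>SG\<^esub> h) = \<one>\<^bsub>SG\<^esub>"
      using hc by (simp add: eq)
    then show ?thesis by (simp add: generate.one)
  qed
next
  case (eng h1 h2)
  have c: "h1 \<in> carrier SG" "h2 \<in> carrier SG"
    using eng.hyps Sg.generate_in_carrier[OF rgens_carrier] by blast+
  have "h1 \<in> Psi 0" using eng.hyps(1) Rs_Psi0 unfolding Rs_def by blast
  then have "h1 \<otimes>\<^bsub>SG\<^esub> Top q h2 \<otimes>\<^bsub>SG\<^esub> inv\<^bsub>SG\<^esub> h1 \<in> Rs k (Q - {q})"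
    using Rs_conj eng.IH(2) unfolding Rs_def by blast
  then have "Top q h1 \<otimes>\<^bsub>SG\<^esub> (h1 \<otimes>\<^bsub>SG\<^esub> Top q h2 \<otimes>\<^bsub>SG\<^esub> inv\<^bsub>SG\<^esub> h1) \<in> generate SG (rgens k (Q - {q}))"
    using generate.eng[OF eng.IH(1)] unfolding Rs_def by blast
  then show ?case unfolding Top_mult[OF c] .
qed

end



lemma sum_list_upt_bound: "sum_list [1..<Suc n] \<le> n * n"
  by (induction n) auto

context seqctx
begin

lemma Rs_mono: "Q1 \<subseteq> Q2 \<Longrightarrow> Rs k Q1 \<subseteq> Rs k Q2"
  unfolding Rs_def by (rule Sg.mono_generate) (auto simp: rgens_def)

lemma Top_list_Rs: "x \<in> Rs k (set qs \<union> Q') \<Longrightarrow> fold Top qs x \<in> Rs k Q'"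
proof (induction qs arbitrary: x)
  case Nil then show ?case by simp
next
  case (Cons q qs)
  have "Top q x \<in> Rs k ((set (q # qs) \<union> Q') - {q})"
    by (rule Top_Rs[OF Cons.prems]) simp
  also have "\<dots> \<subseteq> Rs k (set qs \<union> Q')" by (rule Rs_mono) auto
  finally show ?case using Cons.IH by simp
qed

lemma Psi_Rs: "Psi k \<subseteq> Rs k {1..N k}"
  unfolding Psi_def Rs_def
proof (rule Sg.mono_generate)
  show "gens k \<subseteq> rgens k {1..N k}"
  proof
    fix g assume "g \<in> gens k"
    then obtain j p where jp: "j \<ge> k" "lev j g" "1 \<le> p" "p \<le> N j" "per p g" "g \<in> carrier SG"
      by (auto simp: gens_def)
    show "g \<in> rgens k {1..N k}"
    proof (cases "j = k")
      case True then show ?thesis using jp by (auto simp: rgens_def)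
    next
      case False
      then have "Suc k \<le> j" using jp by simp
      then have "g \<in> gens (Suc k)" using jp unfolding gens_def by blast
      then show ?thesis by (simp add: rgens_def)
    qed
  qed
qed

lemma Rs_empty: "Rs k {} = Psi (Suc k)"
  by (simp add: Rs_def Psi_def rgens_def)

definition Lk :: "nat \<Rightarrow> nat list" where "Lk k = [1..<Suc (N k)]"

lemma set_Lk: "set (Lk k) = {1..N k}"
  by (auto simp: Lk_def)

lemma layers: "x \<in> Psi k \<Longrightarrow> fold Top (concat (map Lk [k..<k+m])) x \<in> Psi (k+m)"
proof (induction m)
  case 0 then show ?case by simp
next
  case (Suc m)
  let ?y = "fold Top (concat (map Lk [k..<k+m])) x"
  have "?y \<in> Rs (k+m) {1..N (k+m)}" using Suc Psi_Rs by blast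
  then have "?y \<in> Rs (k+m) (set (Lk (k+m)) \<union> {})" by (simp add: set_Lk)
  then have "fold Top (Lk (k+m)) ?y \<in> Rs (k+m) {}" by (rule Top_list_Rs)
  then show ?case by (simp add: Rs_empty)
qed

lemma Psi_c: "Psi c = {\<one>\<^bsub>SG\<^esub>}"
proof -
  have "gens c \<subseteq> {\<one>\<^bsub>SG\<^esub>}"
  proof
    fix g assume "g \<in> gens c"
    then obtain j where j: "j \<ge> c" "lev j g" by (auto simp: gens_def)
    have "lcs G j = {\<one>}" using lcs_triv[OF nil j(1)] .
    then have "g = (\<lambda>t. \<one>)" using j(2) by (auto simp: lev_def)
    then show "g \<in> {\<one>\<^bsub>SG\<^esub>}" by (simp add: seq_one)
  qed
  then have "Psi c \<subseteq> {\<one>\<^bsub>SG\<^esub>}" unfolding Psi_def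
    using Sg.mono_generate Sg.generate_one by blast
  then show ?thesis unfolding Psi_def using generate.one by blast
qed

definition Kf :: "(nat \<Rightarrow> 'a) \<Rightarrow> nat \<Rightarrow> (nat \<Rightarrow> 'a) set" where
  "Kf f s = generate SG ((\<lambda>i. (shift ^^ i) f) ` {..<s})"

definition Pinv where
  "Pinv f s y \<longleftrightarrow> y \<in> carrier SG \<and> inv\<^bsub>SG\<^esub> ((shift ^^ s) f) \<otimes>\<^bsub>SG\<^esub> y \<in> Kf f s"

lemma shift_generate:
  assumes A: "A \<subseteq> carrier SG" and x: "x \<in> generate SG A"
  shows "(shift ^^ q) x \<in> generate SG ((shift ^^ q) ` A)"
  using x
proof (induction rule: generate.induct)
  case one then show ?case by (simp add: shift_one generate.one)
next
  case (incl h) then show ?case by (simp add: generate.incl)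
next
  case (inv h)
  then have "h \<in> carrier SG" using A by blast
  then show ?case using inv by (simp add: shift_inv generate.inv)
next
  case (eng h1 h2) then show ?case by (simp add: shift_mult generate.eng)
qed

lemma Kf_carrier: "f \<in> carrier SG \<Longrightarrow> Kf f s \<subseteq> carrier SG"
  unfolding Kf_def by (rule Sg.generate_incl) (auto simp: shift_carrier)

lemma Kf_mono: "s \<le> s' \<Longrightarrow> Kf f s \<subseteq> Kf f s'"
  unfolding Kf_def by (rule Sg.mono_generate) auto

lemma Kf_shift:
  assumes f: "f \<in> carrier SG" and x: "x \<in> Kf f s"
  shows "(shift ^^ q) x \<in> Kf f (s + q)"
proof -
  have A: "(\<lambda>i. (shift ^^ i) f) ` {..<s} \<subseteq> carrier SG" using f by (auto simp: shift_carrier)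
  have "(shift ^^ q) x \<in> generate SG ((shift ^^ q) ` ((\<lambda>i. (shift ^^ i) f) ` {..<s}))"
    using shift_generate[OF A] x unfolding Kf_def by blast
  also have "\<dots> \<subseteq> Kf f (s + q)" unfolding Kf_def
  proof (rule Sg.mono_generate)
    show "(shift ^^ q) ` (\<lambda>i. (shift ^^ i) f) ` {..<s} \<subseteq> (\<lambda>i. (shift ^^ i) f) ` {..<s + q}"
    proof
      fix z assume "z \<in> (shift ^^ q) ` (\<lambda>i. (shift ^^ i) f) ` {..<s}"
      then obtain i where i: "i < s" "z = (shift ^^ q) ((shift ^^ i) f)" by auto
      then have "z = (shift ^^ (q + i)) f" by (simp add: funpow_add)
      moreover have "q + i < s + q" using i by simp
      ultimately show "z \<in> (\<lambda>i. (shift ^^ i) f) ` {..<s + q}" by blast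
    qed
  qed
  finally show ?thesis .
qed

lemma Pinv_step:
  assumes f: "f \<in> carrier SG" and P: "Pinv f s y" and q: "1 \<le> q"
  shows "Pinv f (s + q) (Top q y)"
proof -
  let ?a = "(shift ^^ s) f"
  let ?w = "inv\<^bsub>SG\<^esub> ?a \<otimes>\<^bsub>SG\<^esub> y"
  have ac: "?a \<in> carrier SG" using f by (rule shift_carrier)
  have yc: "y \<in> carrier SG" and w: "?w \<in> Kf f s" using P by (auto simp: Pinv_def)
  have wc: "?w \<in> carrier SG" using ac yc by simp
  have sa: "(shift ^^ (s + q)) f = (shift ^^ q) ?a" by (simp add: funpow_add add.commute)
  have eq: "inv\<^bsub>SG\<^esub> ((shift ^^ (s + q)) f) \<otimes>\<^bsub>SG\<^esub> Top q y
     = (shift ^^ q) ?w \<otimes>\<^bsub>SG\<^esub> (inv\<^bsub>SG\<^esub> ?w \<otimes>\<^bsub>SG\<^esub> inv\<^bsub>SG\<^esub> ?a)"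
    unfolding sa Top_def using ac yc
    by (simp add: shift_mult shift_inv shift_carrier Sg.inv_mult_group Sg.m_assoc)
  have m1: "(shift ^^ q) ?w \<in> Kf f (s + q)" using Kf_shift[OF f w] .
  have Kc: "(\<lambda>i. (shift ^^ i) f) ` {..<s} \<subseteq> carrier SG" using f by (auto simp: shift_carrier)
  have "inv\<^bsub>SG\<^esub> ?w \<in> Kf f s" using w Sg.generate_m_inv_closed[OF Kc] unfolding Kf_def by blast
  then have m2: "inv\<^bsub>SG\<^esub> ?w \<in> Kf f (s + q)" using Kf_mono[of s "s+q" f] by auto
  have "?a \<in> (\<lambda>i. (shift ^^ i) f) ` {..<s + q}" using q by auto
  then have m3: "inv\<^bsub>SG\<^esub> ?a \<in> Kf f (s + q)" unfolding Kf_def by (rule generate.inv)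
  have "(shift ^^ q) ?w \<otimes>\<^bsub>SG\<^esub> (inv\<^bsub>SG\<^esub> ?w \<otimes>\<^bsub>SG\<^esub> inv\<^bsub>SG\<^esub> ?a) \<in> Kf f (s + q)"
    using m1 m2 m3 unfolding Kf_def by (intro generate.eng)
  then show ?thesis unfolding Pinv_def using eq Top_carrier[OF yc] by simp
qed

lemma Pinv_fold:
  assumes f: "f \<in> carrier SG"
  shows "Pinv f s y \<Longrightarrow> \<forall>q\<in>set qs. 1 \<le> q \<Longrightarrow> Pinv f (s + sum_list qs) (fold Top qs y)"
proof (induction qs arbitrary: s y)
  case Nil then show ?case by simp
next
  case (Cons q qs)
  have "Pinv f (s + q) (Top q y)" using Pinv_step[OF f Cons.prems(1)] Cons.prems(2) by simp
  then have "Pinv f (s + q + sum_list qs) (fold Top qs (Top q y))"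
    using Cons.IH Cons.prems(2) by simp
  then show ?case by (simp add: add.assoc)
qed

lemma fold_Top_one: "fold Top qs \<one>\<^bsub>SG\<^esub> = \<one>\<^bsub>SG\<^esub>"
  by (induction qs) (simp_all add: Top_one)

lemma funpow_Top_one: "(Top q ^^ n) \<one>\<^bsub>SG\<^esub> = \<one>\<^bsub>SG\<^esub>"
  by (induction n) (simp_all add: Top_one)

lemma main_loc:
  assumes f: "f \<in> Psi 0" and d: "sum_list (concat (map Lk [0..<c])) \<le> d"
  shows "(shift ^^ d) f \<in> Kf f d"
proof -
  let ?s = "sum_list (concat (map Lk [0..<c]))"
  let ?qs = "concat (map Lk [0..<c]) @ replicate (d - ?s) 1"
  have fc: "f \<in> carrier SG" using f Sg.generate_in_carrier[OF gens_carrier] unfolding Psi_def by blast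
  have "fold Top (concat (map Lk [0..<c])) f \<in> Psi c" using layers[OF f, of c] by simp
  then have "fold Top (concat (map Lk [0..<c])) f = \<one>\<^bsub>SG\<^esub>" using Psi_c by simp
  then have fo: "fold Top ?qs f = \<one>\<^bsub>SG\<^esub>" by (simp add: fold_Top_one funpow_Top_one)
  have P0: "Pinv f 0 f" using fc by (simp add: Pinv_def Kf_def generate.one)
  have pos: "\<forall>q\<in>set ?qs. 1 \<le> q" by (auto simp: Lk_def)
  have "Pinv f (0 + sum_list ?qs) (fold Top ?qs f)" by (rule Pinv_fold[OF fc P0 pos])
  moreover have "0 + sum_list ?qs = d" using d by (simp add: sum_list_replicate)
  ultimately have "Pinv f d \<one>\<^bsub>SG\<^esub>" using fo by simp
  then have "inv\<^bsub>SG\<^esub> ((shift ^^ d) f) \<in> Kf f d"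
    using shift_carrier[OF fc] by (simp add: Pinv_def)
  then have "inv\<^bsub>SG\<^esub> (inv\<^bsub>SG\<^esub> ((shift ^^ d) f)) \<in> Kf f d"
    unfolding Kf_def by (rule Sg.generate_m_inv_closed[rotated]) (auto simp: shift_carrier fc)
  then show ?thesis using shift_carrier[OF fc] by simp
qed

lemma sum_bound:
  assumes "\<And>k. k < c \<Longrightarrow> N k * N k \<le> B"
  shows "sum_list (concat (map Lk [0..<c])) \<le> c * B"
proof -
  have "\<And>m. m \<le> c \<Longrightarrow> sum_list (concat (map Lk [0..<m])) \<le> m * B"
  proof -
    fix m show "m \<le> c \<Longrightarrow> sum_list (concat (map Lk [0..<m])) \<le> m * B"
    proof (induction m)
      case 0 then show ?case by simp
    next
      case (Suc m)
      have "sum_list (Lk m) \<le> N m * N m" unfolding Lk_def by (rule sum_list_upt_bound)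
      also have "\<dots> \<le> B" using assms Suc.prems by simp
      finally show ?case using Suc by simp
    qed
  qed
  then show ?thesis by simp
qed

end



lemma pow_bound: "(n::nat)^(2^i) * n^(2^j) \<le> n^(2^(Suc (max i j)))"
proof (cases "n = 0")
  case True then show ?thesis by (simp add: power_0_left)
next
  case False
  have "(2::nat)^i \<le> 2^(max i j)" "(2::nat)^j \<le> 2^(max i j)" by (simp_all add: power_increasing)
  then have "2^i + 2^j \<le> 2 * (2::nat)^(max i j)" by linarith
  then have "2^i + 2^j \<le> (2::nat)^(Suc (max i j))" by simp
  then have "n^(2^i + 2^j) \<le> n^(2^(Suc (max i j)))" using False by (intro power_increasing) auto
  then show ?thesis by (simp add: power_add)
qed

lemma pow_mono2: "a \<le> b \<Longrightarrow> (n::nat)^(2^a) \<le> n^(2^b)"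
proof (cases "n = 0")
  case True then show ?thesis by (simp add: power_0_left)
next
  case False
  assume "a \<le> b"
  then have "(2::nat)^a \<le> 2^b" by (simp add: power_increasing)
  then show ?thesis using False by (intro power_increasing) auto
qed

theorem mainTheorem12:
  fixes G :: "('a, 'b) monoid_scheme"
  assumes "nilpotent_group G" and "finitely_generated_group G"
  shows "\<exists>p :: int poly. \<forall>n :: nat. \<forall>f \<in> periodic_subgroup G n.
           satisfies_recurrence G (nat (poly p (int n))) f"
proof -
  have grp: "group G" using assms(1) by (simp add: nilpotent_group_def)
  obtain c where nil: "lcs G c = {\<one>\<^bsub>G\<^esub>}" using assms(1) by (auto simp: nilpotent_group_def)
  define p :: "int poly" where "p = 1 + Polynomial.monom (int c) (2 ^ c)"
  have "\<forall>n :: nat. \<forall>f \<in> periodic_subgroup G n. satisfies_recurrence G (nat (poly p (int n))) f"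
  proof (intro allI ballI)
    fix n f assume f: "f \<in> periodic_subgroup G n"
    define N :: "nat \<Rightarrow> nat" where "N = (\<lambda>j. n^(2^j))"
    interpret sc: seqctx G N c
      by (intro seqctx.intro grp seqctx_axioms.intro) (auto simp: N_def nil pow_bound[simplified])
    define d where "d = 1 + c * n^(2 ^ c)"
    have "poly p (int n) = int d" by (simp add: p_def d_def poly_monom)
    then have dd: "nat (poly p (int n)) = d" by simp
    have "periodic_subgroup G n \<subseteq> sc.Psi 0"
      unfolding periodic_subgroup_def sc.Psi_def
    proof (rule sc.Sg.mono_generate)
      show "{f \<in> carrier (seq_group G). has_period_at_most n f} \<subseteq> sc.gens 0"
      proof
        fix g assume g: "g \<in> {f \<in> carrier (seq_group G). has_period_at_most n f}"
        then obtain q where q: "1 \<le> q" "q \<le> n" "\<forall>t. g t = g (t + q)" "g \<in> carrier (seq_group G)"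
          by (auto simp: has_period_at_most_def)
        have "sc.lev 0 g" using q(4) by (simp add: sc.lev_def sc.seq_carrier)
        moreover have "per q g" using q(3) by (simp add: per_def)
        moreover have "q \<le> N 0" using q(2) by (simp add: N_def)
        ultimately show "g \<in> sc.gens 0" using q(1,4) unfolding sc.gens_def by blast
      qed
    qed
    then have f0: "f \<in> sc.Psi 0" using f by blast
    have "sum_list (concat (map sc.Lk [0..<c])) \<le> c * n^(2 ^ c)"
    proof (rule sc.sum_bound)
      fix k assume "k < c"
      have "N k * N k \<le> n^(2^(Suc (max k k)))" unfolding N_def by (rule pow_bound)
      also have "\<dots> \<le> n^(2 ^ c)" using \<open>k < c\<close> by (intro pow_mono2) simp
      finally show "N k * N k \<le> n^(2 ^ c)" .
    qed
    then have "sum_list (concat (map sc.Lk [0..<c])) \<le> d" by (simp add: d_def)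
    then have rec: "(shift ^^ d) f \<in> sc.Kf f d" by (rule sc.main_loc[OF f0])
    have "sc.Kf f d \<subseteq> shift_closure G (generate (seq_group G) {f}) (d - 1)"
      unfolding sc.Kf_def shift_closure_def
    proof (rule sc.Sg.mono_generate)
      show "(\<lambda>i. (shift ^^ i) f) ` {..<d} \<subseteq> (\<Union>i\<in>{0..d - 1}. (shift ^^ i) ` generate (seq_group G) {f})"
      proof
        fix z assume "z \<in> (\<lambda>i. (shift ^^ i) f) ` {..<d}"
        then obtain i where i: "i < d" "z = (shift ^^ i) f" by auto
        have "f \<in> generate (seq_group G) {f}" by (rule generate.incl) simp
        then have "z \<in> (shift ^^ i) ` generate (seq_group G) {f}" using i by blast
        moreover have "i \<in> {0..d - 1}" using i by simp
        ultimately show "z \<in> (\<Union>i\<in>{0..d - 1}. (shift ^^ i) ` generate (seq_group G) {f})" by blast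
      qed
    qed
    then have "(shift ^^ d) f \<in> shift_closure G (generate (seq_group G) {f}) (d - 1)" using rec by blast
    then show "satisfies_recurrence G (nat (poly p (int n))) f"
      unfolding dd satisfies_recurrence_def by (simp add: d_def)
  qed
  then show ?thesis by blast
qed


end
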